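(* Let $T:\mathbb{R}^n\to\mathbb{R}^n$ be an averaged operator with $\mathrm{Fix}(T)\neq\emptyset$ such that $\mathrm{Id}-T$ is coercive, i.e. $\lim_{\|x\|\to\infty}\|x-T(x)\|=\infty$. Let $\{x^k\}$ be a sequence generated by the Safe-L2O method (described in the context) with fallback operator $T$, any sequence of L2O maps $\{\mathcal{L}_k\}$, any $\alpha\in[0,1)$, and a safeguard sequence $\{\mu_k\}$ satisfying the following condition: if the inequality $\|y^k-T(y^k)\|\le\alpha\mu_k$ holds for infinitely many $k$, then $\mu_k\to 0$. Then $$\lim_{k\to\infty} d_{\mathrm{Fix}(T)}(x^k)=0 .$$ Moreover, if $\{x^k\}$ has exactly one cluster point, then $\{x^k\}$ converges to a point $x^\star\in\mathrm{Fix}(T)$.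
   Context: $\|\cdot\|$ is the Euclidean norm on $\mathbb{R}^n$. $\mathrm{Fix}(T):=\{x\in\mathbb{R}^n: T(x)=x\}$ and $d_C(x):=\inf\{\|x-y\|:y\in C\}$. An operator $Q:\mathbb{R}^n\to\mathbb{R}^n$ is nonexpansive if $\|Qx-Qy\|\le\|x-y\|$ for all $x,y$; an operator $T$ is averaged if $T=(1-\lambda)\mathrm{Id}+\lambda Q$ for some $\lambda\in(0,1)$ and some nonexpansive $Q$. Safe-L2O method: fix maps $\mathcal{L}_k:\mathbb{R}^n\to\mathbb{R}^n$ ($k\in\mathbb{N}$; e.g. $\mathcal{L}_k=\mathcal{L}_{\mathrm{L2O}}(\cdot;\zeta^k)$ for a parameterized family and arbitrary parameters $\zeta^k$), an averaged fallback operator $T$, $\alpha\in[0,1)$, and an initial point $x^1\in\mathbb{R}^n$. Set $\mu_1:=\|x^1-T(x^1)\|$. For $k=1,2,\dots$: compute $y^k:=\mathcal{L}_k(x^k)$; if $\|y^k-T(y^k)\|\le\alpha\mu_k$, set $x^{k+1}:=y^k$, otherwise set $x^{k+1}:=T(x^k)$; then compute a new nonnegative value $\mu_{k+1}$ by some safeguard update rule (which may depend on the iterates generated so far). *)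

theory Defs
  imports "HOL-Analysis.Analysis"
begin

definition nonexpansive :: "('a::real_normed_vector \<Rightarrow> 'a) \<Rightarrow> bool" where
  "nonexpansive Q \<longleftrightarrow> (\<forall>x y. norm (Q x - Q y) \<le> norm (x - y))"

definition averaged :: "('a::real_normed_vector \<Rightarrow> 'a) \<Rightarrow> bool" where
  "averaged T \<longleftrightarrow> (\<exists>lam Q. 0 < lam \<and> lam < 1 \<and> nonexpansive Q \<and>
      (\<forall>x. T x = (1 - lam) *\<^sub>R x + lam *\<^sub>R Q x))"

definition Fix :: "('a \<Rightarrow> 'a) \<Rightarrow> 'a set" where
  "Fix T = {x. T x = x}"

text \<open>p is a cluster point of the sequence x (indices k \<ge> 1; the value x 0 is irrelevant):
  some subsequence converges to p.\<close>
definition cluster_point :: "(nat \<Rightarrow> 'a::topological_space) \<Rightarrow> 'a \<Rightarrow> bool" where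
  "cluster_point x p \<longleftrightarrow> (\<exists>r. strict_mono r \<and> (x \<circ> r) \<longlonglongrightarrow> p)"

text \<open>The Safe-L2O iteration (indices start at 1): x, mu generated from L, T, alpha, with an
  arbitrary nonnegative safeguard update.\<close>
definition safe_l2o :: "(nat \<Rightarrow> 'a \<Rightarrow> 'a) \<Rightarrow> ('a::real_normed_vector \<Rightarrow> 'a) \<Rightarrow> real
    \<Rightarrow> (nat \<Rightarrow> 'a) \<Rightarrow> (nat \<Rightarrow> real) \<Rightarrow> bool" where
  "safe_l2o L T \<alpha> x \<mu> \<longleftrightarrow>
     \<mu> 1 = norm (x 1 - T (x 1)) \<and>
     (\<forall>k\<ge>1. 0 \<le> \<mu> k) \<and>
     (\<forall>k\<ge>1. x (Suc k) = (if norm (L k (x k) - T (L k (x k))) \<le> \<alpha> * \<mu> k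
                             then L k (x k) else T (x k)))"

end

theory Submission imports Defs begin

lemma sq_ident:
  fixes a b :: "'a::real_inner"
  shows "(norm ((1 - l) *\<^sub>R a + l *\<^sub>R b))\<^sup>2 =
     (1 - l) * (norm a)\<^sup>2 + l * (norm b)\<^sup>2 - l * (1 - l) * (norm (a - b))\<^sup>2"
  unfolding power2_norm_eq_inner by (simp add: inner_simps algebra_simps inner_commute)

lemma avg_props:
  fixes T :: "'a::real_inner \<Rightarrow> 'a"
  assumes "averaged T"
  shows "\<exists>c>0. (\<forall>x y. norm (T x - T y) \<le> norm (x - y)) \<and>
     (\<forall>x z. T z = z \<longrightarrow> (norm (T x - z))\<^sup>2 \<le> (norm (x - z))\<^sup>2 - c * (norm (x - T x))\<^sup>2)"
proof -
  obtain l Q where l: "0 < l" "l < 1" and Q: "nonexpansive Q"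
    and TQ: "\<And>x. T x = (1 - l) *\<^sub>R x + l *\<^sub>R Q x"
    using assms unfolding averaged_def by blast
  have ne: "norm (T x - T y) \<le> norm (x - y)" for x y
  proof -
    have "T x - T y = (1 - l) *\<^sub>R (x - y) + l *\<^sub>R (Q x - Q y)"
      by (simp add: TQ algebra_simps)
    also have "norm \<dots> \<le> (1 - l) * norm (x - y) + l * norm (Q x - Q y)"
      using l by (metis (no_types, lifting) abs_of_nonneg less_eq_real_def norm_scaleR norm_triangle_ineq diff_ge_0_iff_ge)
    also have "\<dots> \<le> (1 - l) * norm (x - y) + l * norm (x - y)"
      using Q l unfolding nonexpansive_def by (simp add: mult_left_mono)
    finally show ?thesis by (simp add: algebra_simps)
  qed
  have key: "(norm (T x - z))\<^sup>2 \<le> (norm (x - z))\<^sup>2 - ((1 - l) / l) * (norm (x - T x))\<^sup>2"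
    if z: "T z = z" for x z
  proof -
    have "l *\<^sub>R (Q z - z) = 0" using z TQ[of z] by (simp add: algebra_simps)
    hence Qz: "Q z = z" using l by simp
    have bd: "norm (Q x - z) \<le> norm (x - z)"
      using Q Qz unfolding nonexpansive_def by metis
    have e1: "T x - z = (1 - l) *\<^sub>R (x - z) + l *\<^sub>R (Q x - z)"
      by (simp add: TQ algebra_simps)
    have e2: "norm (x - T x) = l * norm ((x - z) - (Q x - z))"
    proof -
      have "x - T x = l *\<^sub>R ((x - z) - (Q x - z))" by (simp add: TQ algebra_simps)
      thus ?thesis using l by simp
    qed
    have e3: "((1 - l) / l) * (norm (x - T x))\<^sup>2 = l * (1 - l) * (norm ((x - z) - (Q x - z)))\<^sup>2"
      using l unfolding e2 by (simp add: power2_eq_square)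
    have "(norm (Q x - z))\<^sup>2 \<le> (norm (x - z))\<^sup>2"
      using bd by (simp add: power_mono)
    then have "l * (norm (Q x - z))\<^sup>2 \<le> l * (norm (x - z))\<^sup>2"
      using l by (simp add: mult_left_mono)
    then show ?thesis
      unfolding e1 sq_ident e3 by (simp add: algebra_simps)
  qed
  show ?thesis
    using l ne key by (intro exI[of _ "(1 - l) / l"]) auto
qed

theorem theorem1:
  fixes T :: "real^'n \<Rightarrow> real^'n"
    and L :: "nat \<Rightarrow> real^'n \<Rightarrow> real^'n"
    and x :: "nat \<Rightarrow> real^'n"
    and \<mu> :: "nat \<Rightarrow> real"
    and \<alpha> :: real
  assumes avg: "averaged T"
    and fix_ne: "Fix T \<noteq> {}"
    and coercive: "filterlim (\<lambda>z. norm (z - T z)) at_top at_infinity"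
    and alpha: "0 \<le> \<alpha>" "\<alpha> < 1"
    and iter: "safe_l2o L T \<alpha> x \<mu>"
    and safeguard: "infinite {k. 1 \<le> k \<and> norm (L k (x k) - T (L k (x k))) \<le> \<alpha> * \<mu> k}
                    \<Longrightarrow> \<mu> \<longlonglongrightarrow> 0"
  shows "(\<lambda>k. infdist (x k) (Fix T)) \<longlonglongrightarrow> 0 \<and>
         ((\<exists>!p. cluster_point x p) \<longrightarrow> (\<exists>xs\<in>Fix T. x \<longlonglongrightarrow> xs))"
proof -
  define R where "R = (\<lambda>z. norm (z - T z))"
  obtain c where c: "c > 0" and ne: "\<And>u v. norm (T u - T v) \<le> norm (u - v)"
    and key: "\<And>u z. T z = z \<Longrightarrow> (norm (T u - z))\<^sup>2 \<le> (norm (u - z))\<^sup>2 - c * (norm (u - T u))\<^sup>2"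
    using avg_props[OF avg] by blast
  have mupos: "\<And>k. 1 \<le> k \<Longrightarrow> 0 \<le> \<mu> k" using iter unfolding safe_l2o_def by blast
  have stepx: "\<And>k. 1 \<le> k \<Longrightarrow> x (Suc k) = (if norm (L k (x k) - T (L k (x k))) \<le> \<alpha> * \<mu> k
                             then L k (x k) else T (x k))" using iter unfolding safe_l2o_def by blast
  have Tdec: "R (T y) \<le> R y" for y unfolding R_def using ne[of y "T y"] by (simp add: norm_minus_commute)
  define S where "S = {k. 1 \<le> k \<and> norm (L k (x k) - T (L k (x k))) \<le> \<alpha> * \<mu> k}"
  have Rlim: "(\<lambda>k. R (x k)) \<longlonglongrightarrow> 0"
  proof (cases "finite S")
    case False
    have mu0: "\<mu> \<longlonglongrightarrow> 0" using safeguard False unfolding S_def by blast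
    show ?thesis unfolding LIMSEQ_iff
    proof (intro allI impI)
      fix e :: real assume e: "0 < e"
      obtain N where N: "\<And>k. k \<ge> N \<Longrightarrow> norm (\<mu> k - 0) < e" using mu0 e unfolding LIMSEQ_iff by blast
      obtain K where K: "K \<in> S" "N \<le> K" using False unfolding infinite_nat_iff_unbounded_le by blast
      have amu: "\<alpha> * \<mu> k < e" if "k \<ge> N" "k \<ge> 1" for k
      proof -
        have "\<alpha> * \<mu> k \<le> \<mu> k" using alpha mupos[OF that(2)] by (simp add: mult_left_le_one_le)
        moreover have "\<mu> k < e" using N[OF that(1)] by simp
        ultimately show ?thesis by simp
      qed
      have "R (x (Suc K + n)) < e" for n
      proof (induction n)
        case 0
        have "K \<ge> 1" using K unfolding S_def by simp
        hence "x (Suc K) = L K (x K)" using K stepx[of K] unfolding S_def by simp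
        thus ?case using K amu[of K] unfolding S_def R_def by force
      next
        case (Suc n)
        define k where "k = Suc K + n"
        have k1: "k \<ge> 1" "k \<ge> N" using K unfolding k_def by auto
        show ?case
        proof (cases "norm (L k (x k) - T (L k (x k))) \<le> \<alpha> * \<mu> k")
          case True
          hence "x (Suc k) = L k (x k)" using stepx[OF k1(1)] by simp
          thus ?thesis using True amu[OF k1(2) k1(1)] unfolding R_def k_def by simp
        next
          case False
          hence "x (Suc k) = T (x k)" using stepx[OF k1(1)] by simp
          thus ?thesis using Tdec[of "x k"] Suc.IH unfolding k_def by simp
        qed
      qed
      hence "\<forall>k\<ge>Suc K. norm (R (x k) - 0) < e"
        by (metis R_def le_Suc_ex norm_ge_zero real_norm_def abs_of_nonneg diff_zero)
      thus "\<exists>no. \<forall>k\<ge>no. norm (R (x k) - 0) < e" by blast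
    qed
  next
    case True
    from True obtain N where N0: "\<forall>k\<in>S. k \<le> N" unfolding finite_nat_set_iff_bounded_le by blast
    have N: "\<And>k. k \<in> S \<Longrightarrow> k \<le> N" using N0 by blast
    define M where "M = Suc N"
    have xT: "x (Suc k) = T (x k)" if "k \<ge> M" for k
    proof -
      have k1: "k \<ge> 1" using that unfolding M_def by simp
      have "k \<notin> S"
      proof
        assume "k \<in> S" hence "k \<le> N" by (rule N)
        thus False using that unfolding M_def by simp
      qed
      note k1 this
      thus ?thesis using stepx[of k] unfolding S_def by (simp split: if_splits)
    qed
    obtain z where z: "T z = z" using fix_ne unfolding Fix_def by blast
    define d where "d = (\<lambda>j. (norm (x (j + M) - z))\<^sup>2)"
    have dstep: "c * (R (x (j + M)))\<^sup>2 \<le> d j - d (Suc j)" for j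
      using key[OF z, of "x (j + M)"] xT[of "j + M"] unfolding d_def R_def by simp
    have "decseq d"
    proof (rule decseq_SucI)
      fix j
      have "0 \<le> c * (R (x (j + M)))\<^sup>2" using c by simp
      thus "d (Suc j) \<le> d j" using dstep[of j] by linarith
    qed
    moreover have "\<forall>i. 0 \<le> d i" unfolding d_def by simp
    ultimately obtain Ld where Ld: "d \<longlonglongrightarrow> Ld" using decseq_convergent[of d 0] by blast
    have "(\<lambda>j. d j - d (Suc j)) \<longlonglongrightarrow> Ld - Ld"
      by (rule tendsto_diff[OF Ld LIMSEQ_Suc[OF Ld]])
    hence hl: "(\<lambda>j. d j - d (Suc j)) \<longlonglongrightarrow> 0" by simp
    have ev1: "eventually (\<lambda>j. (\<lambda>_. 0::real) j \<le> c * (R (x (j + M)))\<^sup>2) sequentially" using c by simp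
    have ev2: "eventually (\<lambda>j. c * (R (x (j + M)))\<^sup>2 \<le> d j - d (Suc j)) sequentially" using dstep by simp
    have "(\<lambda>j. c * (R (x (j + M)))\<^sup>2) \<longlonglongrightarrow> 0"
      by (rule tendsto_sandwich[OF ev1 ev2 tendsto_const hl])
    hence "(\<lambda>j. (1 / c) * (c * (R (x (j + M)))\<^sup>2)) \<longlonglongrightarrow> (1/c) * 0"
      by (intro tendsto_mult tendsto_const)
    hence "(\<lambda>j. (R (x (j + M)))\<^sup>2) \<longlonglongrightarrow> 0" using c by simp
    hence "(\<lambda>j. sqrt ((R (x (j + M)))\<^sup>2)) \<longlonglongrightarrow> sqrt 0" by (rule tendsto_real_sqrt)
    hence "(\<lambda>j. R (x (j + M))) \<longlonglongrightarrow> 0" unfolding R_def by simp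
    thus ?thesis by (rule LIMSEQ_offset)
  qed
  have contT: "continuous_on UNIV T"
    unfolding continuous_on_iff
  proof (intro ballI allI impI)
    fix u :: "real^'n" and e :: real assume "0 < e"
    thus "\<exists>d>0. \<forall>x'\<in>UNIV. dist x' u < d \<longrightarrow> dist (T x') (T u) < e"
      using ne by (intro exI[of _ e]) (auto simp: dist_norm intro: le_less_trans)
  qed
  have contR: "continuous_on UNIV R" unfolding R_def
    by (intro continuous_intros contT)
  obtain B where B: "\<And>k. norm (x k) \<le> B"
  proof -
    have "\<forall>Z. eventually (\<lambda>z. Z \<le> R z) at_infinity" using coercive unfolding R_def filterlim_at_top by blast
    then obtain b where b: "\<And>z. b \<le> norm z \<Longrightarrow> 1 \<le> R z" unfolding eventually_at_infinity by blast
    obtain N where N: "\<And>k. k \<ge> N \<Longrightarrow> norm (R (x k) - 0) < 1" using Rlim unfolding LIMSEQ_iff by force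
    define B where "B = max b (Max ((\<lambda>k. norm (x k)) ` {..<N}))"
    have "norm (x k) \<le> B" for k
    proof (cases "k < N")
      case True thus ?thesis unfolding B_def by (simp add: le_max_iff_disj)
    next
      case False
      hence "R (x k) < 1" using N[of k] unfolding R_def by simp
      hence "norm (x k) < b" using b[of "x k"] by linarith
      thus ?thesis unfolding B_def by simp
    qed
    thus ?thesis using that by blast
  qed
  have part1: "(\<lambda>k. infdist (x k) (Fix T)) \<longlonglongrightarrow> 0"
    unfolding LIMSEQ_iff
  proof (intro allI impI)
    fix e :: real assume e: "0 < e"
    have "\<exists>\<delta>>0. \<forall>y. norm y \<le> B \<longrightarrow> R y < \<delta> \<longrightarrow> infdist y (Fix T) < e"
    proof -
      define Ss where "Ss = cball 0 B \<inter> {y. e \<le> infdist y (Fix T)}"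
      have cS: "compact Ss" unfolding Ss_def
        by (intro compact_Int_closed compact_cball closed_Collect_le continuous_intros)
      show ?thesis
      proof (cases "Ss = {}")
        case True
        thus ?thesis unfolding Ss_def by (intro exI[of _ 1]) (auto simp: not_le)
      next
        case False
        obtain y0 where y0: "y0 \<in> Ss" "\<And>y. y \<in> Ss \<Longrightarrow> R y0 \<le> R y"
          using continuous_attains_inf[OF cS False continuous_on_subset[OF contR]] by blast
        have "R y0 > 0"
        proof (rule ccontr)
          assume "\<not> R y0 > 0"
          hence "y0 \<in> Fix T" unfolding R_def Fix_def by simp
          thus False using y0(1) e unfolding Ss_def by simp
        qed
        thus ?thesis using y0 unfolding Ss_def by (intro exI[of _ "R y0"]) (force simp: not_le)
      qed
    qed
    then obtain \<delta> where d: "\<delta> > 0" "\<And>y. norm y \<le> B \<Longrightarrow> R y < \<delta> \<Longrightarrow> infdist y (Fix T) < e" by blast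
    obtain N where N: "\<And>k. k \<ge> N \<Longrightarrow> norm (R (x k) - 0) < \<delta>" using Rlim d unfolding LIMSEQ_iff by blast
    have "\<forall>k\<ge>N. norm (infdist (x k) (Fix T) - 0) < e"
      using N d B by (simp add: infdist_nonneg R_def)
    thus "\<exists>no. \<forall>k\<ge>no. norm (infdist (x k) (Fix T) - 0) < e" by blast
  qed
  have part2: "\<exists>xs\<in>Fix T. x \<longlonglongrightarrow> xs" if u: "\<exists>!p. cluster_point x p"
  proof -
    obtain p where p: "cluster_point x p" and pu: "\<And>q. cluster_point x q \<Longrightarrow> q = p" using u by blast
    have bdd: "bounded (range x)" using B unfolding bounded_iff by blast
    have conv: "x \<longlonglongrightarrow> p"
    proof (rule ccontr)
      assume "\<not> x \<longlonglongrightarrow> p"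
      then obtain e where e: "e > 0" "\<forall>N. \<exists>k\<ge>N. \<not> norm (x k - p) < e"
        unfolding LIMSEQ_iff by blast
      have "infinite {k. e \<le> norm (x k - p)}"
        unfolding infinite_nat_iff_unbounded_le using e by (auto simp: not_less)
      from infinite_enumerate[OF this] obtain r :: "nat \<Rightarrow> nat" where r0: "strict_mono r" "\<forall>n. r n \<in> {k. e \<le> norm (x k - p)}"
        by (elim exE conjE)
      hence r: "strict_mono r" "\<And>n. e \<le> norm (x (r n) - p)" by auto
      have "bounded (range (x \<circ> r))" using bdd by (rule bounded_subset) auto
      from bounded_imp_convergent_subsequence[OF this] obtain q and s :: "nat \<Rightarrow> nat" where s: "strict_mono s" "((x \<circ> r) \<circ> s) \<longlonglongrightarrow> q"
        by blast
      have "cluster_point x q" unfolding cluster_point_def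
        using s r strict_mono_o[OF r(1) s(1)] by (intro exI[of _ "r \<circ> s"]) (simp add: o_assoc)
      hence qp: "q = p" by (rule pu)
      have lim: "(\<lambda>n. norm (((x \<circ> r) \<circ> s) n - p)) \<longlonglongrightarrow> norm (q - p)"
        by (rule tendsto_norm[OF tendsto_diff[OF s(2) tendsto_const]])
      have "\<exists>N. \<forall>n\<ge>N. e \<le> norm (((x \<circ> r) \<circ> s) n - p)" using r by simp
      from LIMSEQ_le_const[OF lim this] have "e \<le> norm (q - p)" .
      thus False using qp e by simp
    qed
    have "(\<lambda>k. R (x k)) \<longlonglongrightarrow> R p"
      by (rule continuous_on_tendsto_compose[OF contR conv]) auto
    hence "R p = 0" using Rlim LIMSEQ_unique by blast
    hence "p \<in> Fix T" unfolding R_def Fix_def by simp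
    thus ?thesis using conv by blast
  qed
  show ?thesis using part1 part2 by blast
qed

end
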